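(* For every integer $n\ge1$ and every positive multiple $m$ of $4$, the graph $G_{n,m}$ is vertex transitive.
   Context: For $m$ a multiple of $4$ and $n\ge1$, $G_{n,m}$ is the simple graph with vertex set $\{i(a,b): i\in\mathbb{Z}_m,\ a,b\in\mathbb{Z}_n\}$ ($n^2m$ vertices; the vertices with first index $i$ form cluster $i$, clusters arranged as the nodes of the cycle $\mathbb{Z}_m$, labelled $0,\dots,m-1$), with an edge between: (1) all pairs $i(a,b),j(c,d)$ with $i$ and $j$ adjacent in $\mathbb{Z}_m$ ("short" edges); (2) all pairs $i(a,b),j(a,d)$ with $b\ne d$, $i$ even and $j=(i+m/4)\bmod m$; (3) all pairs $i(a,b),j(c,b)$ with $a\ne c$, $i$ even and $j=(i-m/4)\bmod m$; (4) all pairs $i(a,b),j(c,b)$ with $a\ne c$, $i$ odd and $j=(i+m/4)\bmod m$; (5) all pairs $i(a,b),j(a,d)$ with $b\ne d$, $i$ odd and $j=(i-m/4)\bmod m$. *)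

theory Defs
  imports Main
begin

text \<open>Vertices of G_{n,m}: triples (i,a,b) with i in Z_m (as 0..m-1) and a,b in Z_n (as 0..n-1).\<close>

type_synonym gvert = "nat \<times> nat \<times> nat"

definition G_verts :: "nat \<Rightarrow> nat \<Rightarrow> gvert set" where
  "G_verts n m = {(i,a,b). i < m \<and> a < n \<and> b < n}"

text \<open>Directed generating rules (2)-(5) and the short edges (1); the edge relation is their
  symmetric closure restricted to the vertex set.\<close>

definition G_rule :: "nat \<Rightarrow> gvert \<Rightarrow> gvert \<Rightarrow> bool" where
  "G_rule m x y = (case x of (i,a,b) \<Rightarrow> case y of (j,c,d) \<Rightarrow>
      j = (i + 1) mod m
    \<or> (even i \<and> j = (i + m div 4) mod m \<and> a = c \<and> b \<noteq> d)
    \<or> (even i \<and> j = (i + m - m div 4) mod m \<and> b = d \<and> a \<noteq> c)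
    \<or> (odd i \<and> j = (i + m div 4) mod m \<and> b = d \<and> a \<noteq> c)
    \<or> (odd i \<and> j = (i + m - m div 4) mod m \<and> a = c \<and> b \<noteq> d))"

definition G_adj :: "nat \<Rightarrow> nat \<Rightarrow> gvert \<Rightarrow> gvert \<Rightarrow> bool" where
  "G_adj n m x y = (x \<in> G_verts n m \<and> y \<in> G_verts n m \<and> (G_rule m x y \<or> G_rule m y x))"

definition is_automorphism :: "'v set \<Rightarrow> ('v \<Rightarrow> 'v \<Rightarrow> bool) \<Rightarrow> ('v \<Rightarrow> 'v) \<Rightarrow> bool" where
  "is_automorphism V E f = (bij_betw f V V \<and> (\<forall>x\<in>V. \<forall>y\<in>V. E (f x) (f y) \<longleftrightarrow> E x y))"

definition vertex_transitive :: "'v set \<Rightarrow> ('v \<Rightarrow> 'v \<Rightarrow> bool) \<Rightarrow> bool" where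
  "vertex_transitive V E = (\<forall>u\<in>V. \<forall>v\<in>V. \<exists>f. is_automorphism V E f \<and> f u = v)"

end

theory Submission imports Defs begin

lemma modeq: fixes i j k m :: nat assumes "i < m" "j < m" "k \<le> m" shows "(j = (i + k) mod m) = (j = i + k \<or> j + m = i + k)"
proof (cases "i + k < m")
  case True then have "(i + k) mod m = i + k" by (rule mod_less)
  then show ?thesis using assms True by auto
next
  case False
  then have "(i + k) mod m = i + k - m" using assms by (simp add: mod_if le_mod_geq)
  then show ?thesis using assms False by auto
qed

lemma modeq2: fixes i j k m :: nat assumes "i < m" "j < m" "k \<le> m" shows "(j = (i + m - k) mod m) = (j + k = i + m \<or> j + k = i)"
proof (cases "i + m - k < m")
  case True then have "(i + m - k) mod m = i + m - k" by (rule mod_less)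
  then show ?thesis using assms True by auto
next
  case False
  then have "(i + m - k) mod m = i + m - k - m" using assms by (simp add: mod_if le_mod_geq)
  then show ?thesis using assms False by auto
qed

lemma rot_rule:
  assumes m: "m = 4*q" "q > 0" and "i < m" "j < m"
  shows "G_rule m (Suc i mod m, b, a) (Suc j mod m, d, c) = G_rule m (i,a,b) (j,c,d)"
proof -
  have l: "Suc i mod m < m" "Suc j mod m < m" using assms by auto
  have q: "m div 4 = q" using m by simp
  have qm: "q \<le> m" "1 \<le> m" "4 \<le> m" using m by auto
  have si: "Suc i mod m = (if Suc i = m then 0 else Suc i)" using assms by auto
  have sj: "Suc j mod m = (if Suc j = m then 0 else Suc j)" using assms by auto
  have A: "(Suc j mod m = (Suc i mod m + 1) mod m) = (j = (i + 1) mod m)"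
    apply (simp only: modeq[OF l qm(2)] modeq[OF assms(3,4) qm(2)]) unfolding si sj using assms qm by (auto; presburger)
  have B: "even (Suc i mod m) = odd i" unfolding si using assms by (auto; presburger)
  have C: "(Suc j mod m = (Suc i mod m + q) mod m) = (j = (i + q) mod m)"
    apply (simp only: modeq[OF l qm(1)] modeq[OF assms(3,4) qm(1)]) unfolding si sj using assms qm by (auto; presburger)
  have D: "(Suc j mod m = (Suc i mod m + m - q) mod m) = (j = (i + m - q) mod m)"
    apply (simp only: modeq2[OF l qm(1)] modeq2[OF assms(3,4) qm(1)]) unfolding si sj using assms qm by (auto; presburger)
  show ?thesis unfolding G_rule_def prod.case q A B C D by auto
qed

definition rot :: "nat \<Rightarrow> gvert \<Rightarrow> gvert" where
  "rot m = (\<lambda>(i,a,b). (Suc i mod m, b, a))"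

definition tr :: "nat \<Rightarrow> nat \<Rightarrow> nat \<Rightarrow> nat" where
  "tr x y = (\<lambda>z. if z = x then y else if z = y then x else z)"

definition pm :: "(nat \<Rightarrow> nat) \<Rightarrow> (nat \<Rightarrow> nat) \<Rightarrow> gvert \<Rightarrow> gvert" where
  "pm s t = (\<lambda>(i,a,b). (i, s a, t b))"

lemma auto_comp:
  assumes "is_automorphism V E f" "is_automorphism V E g"
  shows "is_automorphism V E (g \<circ> f)"
proof -
  have bf: "bij_betw f V V" and bg: "bij_betw g V V" using assms unfolding is_automorphism_def by auto
  have fV: "\<And>x. x \<in> V \<Longrightarrow> f x \<in> V" using bf bij_betwE by blast
  show ?thesis unfolding is_automorphism_def
    using bij_betw_trans[OF bf bg] assms fV unfolding is_automorphism_def by auto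
qed

lemma auto_id: "is_automorphism V E id"
  unfolding is_automorphism_def by auto

lemma auto_pow:
  assumes "is_automorphism V E f"
  shows "is_automorphism V E (f ^^ k)"
proof (induction k)
  case 0 then show ?case using auto_id by (simp add: id_def)
next
  case (Suc k)
  have "f ^^ Suc k = f \<circ> f ^^ k" by simp
  then show ?case using auto_comp[OF Suc assms] by (simp only: funpow.simps(2))
qed

lemma rot_auto:
  assumes m: "m = 4*q" "q > 0"
  shows "is_automorphism (G_verts n m) (G_adj n m) (rot m)"
proof -
  have mp: "m > 0" using m by simp
  have inV: "\<And>x. x \<in> G_verts n m \<Longrightarrow> rot m x \<in> G_verts n m"
    unfolding G_verts_def rot_def using mp by auto
  let ?g = "\<lambda>(i::nat,a::nat,b::nat). ((i + m - 1) mod m, b, a)"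
  have bij: "bij_betw (rot m) (G_verts n m) (G_verts n m)"
  proof (rule bij_betw_byWitness[where f' = ?g])
    show "\<forall>x\<in>G_verts n m. ?g (rot m x) = x"
    proof
      fix x assume "x \<in> G_verts n m"
      then obtain i a b where x: "x = (i,a,b)" "i < m" unfolding G_verts_def by auto
      have "(Suc i mod m + m - 1) mod m = i"
      proof (cases "Suc i = m")
        case True then show ?thesis using x mp by simp
      next
        case False then have "Suc i mod m = Suc i" using x by simp
        then show ?thesis using x by simp
      qed
      then show "?g (rot m x) = x" unfolding x rot_def by simp
    qed
    show "\<forall>x\<in>G_verts n m. rot m (?g x) = x"
    proof
      fix x assume "x \<in> G_verts n m"
      then obtain i a b where x: "x = (i,a,b)" "i < m" unfolding G_verts_def by auto
      have "Suc ((i + m - 1) mod m) mod m = i"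
      proof (cases "i = 0")
        case True then show ?thesis using x mp by (simp add: mod_Suc)
      next
        case False then have e: "i + m - 1 = (i - 1) + m" by simp
        have "((i - 1) + m) mod m = i - 1" using x by simp
        then have "(i + m - 1) mod m = i - 1" unfolding e .
        then show ?thesis using x False by simp
      qed
      then show "rot m (?g x) = x" unfolding x rot_def by simp
    qed
    show "rot m ` G_verts n m \<subseteq> G_verts n m" using inV by auto
    show "?g ` G_verts n m \<subseteq> G_verts n m" unfolding G_verts_def using mp by auto
  qed
  have adj: "G_adj n m (rot m x) (rot m y) = G_adj n m x y" if xy: "x \<in> G_verts n m" "y \<in> G_verts n m" for x y
  proof -
    obtain i a b where x: "x = (i,a,b)" "i < m" using xy unfolding G_verts_def by auto
    obtain j c d where y: "y = (j,c,d)" "j < m" using xy unfolding G_verts_def by auto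
    have rx: "rot m x = (Suc i mod m, b, a)" and ry: "rot m y = (Suc j mod m, d, c)"
      unfolding x y rot_def by simp_all
    have "G_adj n m (rot m x) (rot m y) = (G_rule m (rot m x) (rot m y) \<or> G_rule m (rot m y) (rot m x))"
      unfolding G_adj_def using xy inV by blast
    also have "\<dots> = (G_rule m x y \<or> G_rule m y x)"
      apply (subst rx, subst ry, subst rx, subst ry)
      apply (subst rot_rule[OF m x(2) y(2)], subst rot_rule[OF m y(2) x(2)])
      by (simp only: x(1) y(1))
    also have "\<dots> = G_adj n m x y" unfolding G_adj_def using xy by blast
    finally show ?thesis .
  qed
  show ?thesis unfolding is_automorphism_def using bij adj by auto
qed

lemma tr_lt: "x < n \<Longrightarrow> y < n \<Longrightarrow> z < n \<Longrightarrow> tr x y z < n"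
  unfolding tr_def by auto

lemma tr_inv: "tr x y (tr x y z) = z"
  unfolding tr_def by auto

lemma tr_eq: "(tr x y z = tr x y w) = (z = w)"
  by (metis tr_inv)

lemma pm_rule: "G_rule m (pm (tr a c) (tr b d) x) (pm (tr a c) (tr b d) y) = G_rule m x y"
proof -
  obtain i a' b' where x: "x = (i,a',b')" using prod_cases3 by blast
  obtain j c' d' where y: "y = (j,c',d')" using prod_cases3 by blast
  show ?thesis unfolding x y pm_def G_rule_def prod.case tr_eq ..
qed

lemma pm_auto:
  assumes "a < n" "c < n" "b < n" "d < n"
  shows "is_automorphism (G_verts n m) (G_adj n m) (pm (tr a c) (tr b d))"
proof -
  let ?f = "pm (tr a c) (tr b d)"
  have inV: "\<And>x. x \<in> G_verts n m \<Longrightarrow> ?f x \<in> G_verts n m"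
    unfolding G_verts_def pm_def using assms tr_lt by auto
  have bij: "bij_betw ?f (G_verts n m) (G_verts n m)"
    apply (rule bij_betw_byWitness[where f' = ?f])
    using inV by (auto simp: pm_def tr_inv)
  have adj: "G_adj n m (?f x) (?f y) = G_adj n m x y" if xy: "x \<in> G_verts n m" "y \<in> G_verts n m" for x y
  proof -
    show ?thesis unfolding G_adj_def pm_rule using xy inV by blast
  qed
  show ?thesis unfolding is_automorphism_def using bij adj by auto
qed

lemma rot_pow:
  assumes "i < m"
  shows "(rot m ^^ k) (i,a,b) = ((i + k) mod m, if even k then a else b, if even k then b else a)"
proof (induction k)
  case 0 then show ?case using assms by simp
next
  case (Suc k) then show ?case by (simp add: rot_def mod_Suc_eq)
qed


theorem claim4p3:
  fixes n m :: nat
  assumes "n \<ge> 1" and "m > 0" and "4 dvd m"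
  shows "vertex_transitive (G_verts n m) (G_adj n m)"
proof -
  obtain q where m: "m = 4*q" using assms(3) by auto
  have q: "q > 0" using assms(2) m by auto
  show ?thesis unfolding vertex_transitive_def
  proof (intro ballI)
    fix u v assume u: "u \<in> G_verts n m" and v: "v \<in> G_verts n m"
    obtain i a b where ux: "u = (i,a,b)" "i < m" "a < n" "b < n" using u unfolding G_verts_def by auto
    obtain j c d where vx: "v = (j,c,d)" "j < m" "c < n" "d < n" using v unfolding G_verts_def by auto
    define k where "k = j + m - i"
    define a' where "a' = (if even k then a else b)"
    define b' where "b' = (if even k then b else a)"
    have a': "a' < n" "b' < n" unfolding a'_def b'_def using ux by auto
    have ik: "(i + k) mod m = j" unfolding k_def using ux vx by simp
    have w: "(rot m ^^ k) u = (j, a', b')"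
      unfolding ux(1) rot_pow[OF ux(2)] ik a'_def b'_def ..
    let ?f = "pm (tr a' c) (tr b' d) \<circ> rot m ^^ k"
    have "is_automorphism (G_verts n m) (G_adj n m) ?f"
      by (rule auto_comp[OF auto_pow[OF rot_auto[OF m q]] pm_auto[OF a'(1) vx(3) a'(2) vx(4)]])
    moreover have "?f u = v" using w vx(1) by (simp add: pm_def tr_def)
    ultimately show "\<exists>f. is_automorphism (G_verts n m) (G_adj n m) f \<and> f u = v" by blast
  qed
qed

end
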